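(* For $(c,d)\in\mathbb{C}\times\mathbb{C}^*$ let $f_{c,d}(z) = 1 + \frac cz + \frac d{z^2}$, with critical points $0$ and $-2d/c$ ($=\infty$ when $c=0$), and identify $(c,d)$ with $[c:d:1]\in\mathbb{CP}^2$. Let $\mathcal{X}_n$ be the set of $(c,d)\in\mathbb{C}\times\mathbb{C}^*$ such that $0$ is periodic under $f_{c,d}$ with period dividing $n$, and $\mathcal{Y}_m$ the set of $(c,d)\in\mathbb{C}\times\mathbb{C}^*$ such that $-2d/c$ is periodic under $f_{c,d}$ with period dividing $m$, with closures $\overline{\mathcal{X}_n}$, $\overline{\mathcal{Y}_m}$ in $\mathbb{CP}^2$. Then for all $n\ge 3$ and $m\ge 1$, \[ \overline{\mathcal{X}_n}\cap\overline{\mathcal{Y}_m}\cap\{[c:d:0] \in \mathbb{CP}^2\} = \emptyset. \] *)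

theory Defs
  imports "HOL-Analysis.Analysis"
begin

text \<open>The Riemann sphere is modelled as complex option, None being infinity.
  fmap c d is f_{c,d}(z) = 1 + c/z + d/z^2 extended to the sphere
  (f(infinity) = 1, f(0) = infinity, which is correct since d is nonzero).\<close>

fun fmap :: "complex \<Rightarrow> complex \<Rightarrow> complex option \<Rightarrow> complex option" where
  "fmap c d None = Some 1"
| "fmap c d (Some z) = (if z = 0 then None else Some (1 + c / z + d / z^2))"

definition crit2 :: "complex \<Rightarrow> complex \<Rightarrow> complex option" where
  "crit2 c d = (if c = 0 then None else Some (-2 * d / c))"

definition Xset :: "nat \<Rightarrow> (complex \<times> complex) set" where
  "Xset n = {(c, d). d \<noteq> 0 \<and> (fmap c d ^^ n) (Some 0) = Some 0}"

definition Yset :: "nat \<Rightarrow> (complex \<times> complex) set" where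
  "Yset m = {(c, d). d \<noteq> 0 \<and> (fmap c d ^^ m) (crit2 c d) = crit2 c d}"

text \<open>Closure in CP^2 of a subset S of the affine chart (c,d) = [c:d:1]:
  the projective point with homogeneous coordinates v (nonzero) lies in the closure
  iff some sequence of points of S converges to it in CP^2, i.e. iff suitable
  rescaled lifts [s_k c_k : s_k d_k : s_k] converge to v in C^3.\<close>
definition in_proj_closure :: "(complex \<times> complex) set \<Rightarrow> complex \<times> complex \<times> complex \<Rightarrow> bool" where
  "in_proj_closure S v \<longleftrightarrow> v \<noteq> 0 \<and>
     (\<exists>u :: nat \<Rightarrow> complex \<times> complex. \<exists>s :: nat \<Rightarrow> complex.
        (\<forall>k. u k \<in> S \<and> s k \<noteq> 0) \<and>
        (\<lambda>k. (s k * fst (u k), s k * snd (u k), s k)) \<longlonglongrightarrow> v)"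

end

theory Submission
  imports Defs
begin

definition hh :: "complex \<Rightarrow> complex \<Rightarrow> complex \<Rightarrow> complex" where
  "hh a b z = a / z + b / z^2"

definition gg :: "complex \<Rightarrow> complex \<Rightarrow> complex \<Rightarrow> complex" where
  "gg a b z = 1 + a / hh a b z"

definition good :: "complex \<Rightarrow> complex \<Rightarrow> complex \<Rightarrow> bool" where
  "good a b z \<longleftrightarrow> z \<noteq> 0 \<and> hh a b z \<noteq> 0"

lemma step:
  fixes C D s y :: "nat \<Rightarrow> complex"
  assumes s0: "\<And>k. s k \<noteq> 0" and sl: "s \<longlonglongrightarrow> 0"
    and sC: "(\<lambda>k. s k * C k) \<longlonglongrightarrow> a" and sD: "(\<lambda>k. s k * D k) \<longlonglongrightarrow> b"
    and y: "y \<longlonglongrightarrow> \<zeta>" and g: "good a b \<zeta>"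
  shows "\<exists>w y'. (\<forall>\<^sub>F k in sequentially. fmap (C k) (D k) (Some (y k)) = Some (w k)
              \<and> fmap (C k) (D k) (Some (w k)) = Some (y' k))
          \<and> (\<lambda>k. s k * w k) \<longlonglongrightarrow> hh a b \<zeta> \<and> y' \<longlonglongrightarrow> gg a b \<zeta>"
proof -
  define w where "w k = 1 + C k / y k + D k / (y k)^2" for k
  define y' where "y' k = 1 + C k / w k + D k / (w k)^2" for k
  have z0: "\<zeta> \<noteq> 0" "hh a b \<zeta> \<noteq> 0" using g by (auto simp: good_def)
  have ev1: "\<forall>\<^sub>F k in sequentially. y k \<noteq> 0" using tendsto_imp_eventually_ne[OF y z0(1)] .
  have sw: "(\<lambda>k. s k * w k) \<longlonglongrightarrow> hh a b \<zeta>"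
  proof -
    have "(\<lambda>k. s k + (s k * C k) / y k + (s k * D k) / (y k)^2) \<longlonglongrightarrow> 0 + a/\<zeta> + b/\<zeta>^2"
      by (intro tendsto_intros sl sC sD y) (use z0 in auto)
    moreover have "(\<lambda>k. s k * w k) = (\<lambda>k. s k + (s k * C k) / y k + (s k * D k) / (y k)^2)"
      by (auto simp: w_def algebra_simps)
    ultimately show ?thesis by (simp add: hh_def)
  qed
  have ev2: "\<forall>\<^sub>F k in sequentially. s k * w k \<noteq> 0" using tendsto_imp_eventually_ne[OF sw z0(2)] .
  have yl: "y' \<longlonglongrightarrow> gg a b \<zeta>"
  proof -
    have "(\<lambda>k. 1 + (s k * C k) / (s k * w k) + s k * ((s k * D k) / (s k * w k)^2))
           \<longlonglongrightarrow> 1 + a / hh a b \<zeta> + 0 * (b / (hh a b \<zeta>)^2)"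
      by (intro tendsto_intros sl sC sD sw) (use z0 in auto)
    moreover have "(\<lambda>k. 1 + (s k * C k) / (s k * w k) + s k * ((s k * D k) / (s k * w k)^2)) = y'"
    proof
      fix k
      show "1 + (s k * C k) / (s k * w k) + s k * ((s k * D k) / (s k * w k)^2) = y' k"
        using s0[of k] by (cases "w k = 0") (auto simp: y'_def field_simps power2_eq_square)
    qed
    ultimately show ?thesis by (simp add: gg_def)
  qed
  have "\<forall>\<^sub>F k in sequentially. fmap (C k) (D k) (Some (y k)) = Some (w k)
              \<and> fmap (C k) (D k) (Some (w k)) = Some (y' k)"
    using ev1 ev2 by eventually_elim (auto simp: w_def y'_def)
  then show ?thesis using sw yl by blast
qed


lemma orbit:
  fixes C D s z :: "nat \<Rightarrow> complex"
  assumes s0: "\<And>k. s k \<noteq> 0" and sl: "s \<longlonglongrightarrow> 0"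
    and sC: "(\<lambda>k. s k * C k) \<longlonglongrightarrow> a" and sD: "(\<lambda>k. s k * D k) \<longlonglongrightarrow> b"
    and z: "z \<longlonglongrightarrow> \<zeta>" and g: "\<And>j. good a b ((gg a b ^^ j) \<zeta>)"
  shows "\<exists>y. (\<forall>\<^sub>F k in sequentially. (fmap (C k) (D k) ^^ (2*j)) (Some (z k)) = Some (y k))
          \<and> y \<longlonglongrightarrow> (gg a b ^^ j) \<zeta>"
proof (induction j)
  case 0
  then show ?case using z by (intro exI[of _ z]) auto
next
  case (Suc j)
  then obtain y where ev: "\<forall>\<^sub>F k in sequentially. (fmap (C k) (D k) ^^ (2*j)) (Some (z k)) = Some (y k)"
    and yl: "y \<longlonglongrightarrow> (gg a b ^^ j) \<zeta>" by blast
  from step[OF s0 sl sC sD yl g[of j]] obtain w y' where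
    ev2: "\<forall>\<^sub>F k in sequentially. fmap (C k) (D k) (Some (y k)) = Some (w k)
              \<and> fmap (C k) (D k) (Some (w k)) = Some (y' k)"
    and y'l: "y' \<longlonglongrightarrow> gg a b ((gg a b ^^ j) \<zeta>)" by blast
  have "\<forall>\<^sub>F k in sequentially. (fmap (C k) (D k) ^^ (2*Suc j)) (Some (z k)) = Some (y' k)"
    using ev ev2 by eventually_elim auto
  moreover have "y' \<longlonglongrightarrow> (gg a b ^^ Suc j) \<zeta>" using y'l by simp
  ultimately show ?case by blast
qed

lemma orbit_odd:
  fixes C D s z :: "nat \<Rightarrow> complex"
  assumes s0: "\<And>k. s k \<noteq> 0" and sl: "s \<longlonglongrightarrow> 0"
    and sC: "(\<lambda>k. s k * C k) \<longlonglongrightarrow> a" and sD: "(\<lambda>k. s k * D k) \<longlonglongrightarrow> b"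
    and z: "z \<longlonglongrightarrow> \<zeta>" and g: "\<And>j. good a b ((gg a b ^^ j) \<zeta>)"
  shows "\<exists>w. (\<forall>\<^sub>F k in sequentially. (fmap (C k) (D k) ^^ (2*j+1)) (Some (z k)) = Some (w k))
          \<and> (\<lambda>k. s k * w k) \<longlonglongrightarrow> hh a b ((gg a b ^^ j) \<zeta>)"
proof -
  from orbit[OF s0 sl sC sD z g, of j] obtain y where
    ev: "\<forall>\<^sub>F k in sequentially. (fmap (C k) (D k) ^^ (2*j)) (Some (z k)) = Some (y k)"
    and yl: "y \<longlonglongrightarrow> (gg a b ^^ j) \<zeta>" by blast
  from step[OF s0 sl sC sD yl g[of j]] obtain w y' where
    ev2: "\<forall>\<^sub>F k in sequentially. fmap (C k) (D k) (Some (y k)) = Some (w k)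
              \<and> fmap (C k) (D k) (Some (w k)) = Some (y' k)"
    and wl: "(\<lambda>k. s k * w k) \<longlonglongrightarrow> hh a b ((gg a b ^^ j) \<zeta>)" by blast
  have "\<forall>\<^sub>F k in sequentially. (fmap (C k) (D k) ^^ (2*j+1)) (Some (z k)) = Some (w k)"
    using ev ev2 by eventually_elim auto
  then show ?thesis using wl by blast
qed

lemma unpack:
  assumes "in_proj_closure S (a, b, 0)"
  obtains C D s :: "nat \<Rightarrow> complex" where "\<And>k. (C k, D k) \<in> S" "\<And>k. s k \<noteq> 0"
    "s \<longlonglongrightarrow> 0" "(\<lambda>k. s k * C k) \<longlonglongrightarrow> a" "(\<lambda>k. s k * D k) \<longlonglongrightarrow> b"
proof -
  from assms obtain u s where us: "\<forall>k. u k \<in> S \<and> s k \<noteq> 0"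
    and lim: "(\<lambda>k. (s k * fst (u k), s k * snd (u k), s k)) \<longlonglongrightarrow> (a, b, 0)"
    unfolding in_proj_closure_def by blast
  have l1: "(\<lambda>k. s k * fst (u k)) \<longlonglongrightarrow> a" using tendsto_fst[OF lim] by simp
  have l2: "(\<lambda>k. s k * snd (u k)) \<longlonglongrightarrow> b" using tendsto_fst[OF tendsto_snd[OF lim]] by simp
  have l3: "s \<longlonglongrightarrow> 0" using tendsto_snd[OF tendsto_snd[OF lim]] by simp
  show ?thesis
    by (rule that[of "\<lambda>k. fst (u k)" "\<lambda>k. snd (u k)" s]) (use us l1 l2 l3 in auto)
qed

lemma X_false:
  fixes a b :: complex
  assumes cl: "in_proj_closure (Xset n) (a, b, 0)" and n3: "n \<ge> 3"
    and inv: "\<And>j. good a b ((gg a b ^^ j) 1)"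
  shows False
proof -
  obtain C D s :: "nat \<Rightarrow> complex" where mem: "\<And>k. (C k, D k) \<in> Xset n" and s0: "\<And>k. s k \<noteq> 0"
    and sl: "s \<longlonglongrightarrow> 0" and sC: "(\<lambda>k. s k * C k) \<longlonglongrightarrow> a" and sD: "(\<lambda>k. s k * D k) \<longlonglongrightarrow> b"
    using unpack[OF cl] by blast
  have key: "(fmap (C k) (D k) ^^ (n - 2)) (Some 1) = Some 0" for k
  proof -
    have "(fmap (C k) (D k) ^^ n) (Some 0) = Some 0" using mem[of k] by (simp add: Xset_def)
    moreover have nn: "(n - 2) + 2 = n" using n3 by simp
    ultimately have "(fmap (C k) (D k) ^^ ((n - 2) + 2)) (Some 0) = Some 0" by (simp only: nn)
    then show ?thesis by (simp only: funpow_add o_apply) (simp add: numeral_2_eq_2)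
  qed
  have one: "(\<lambda>k. 1::complex) \<longlonglongrightarrow> 1" by simp
  have "\<exists>j. n - 2 = 2*j \<or> n - 2 = 2*j+1" by presburger
  then obtain j where "n - 2 = 2*j \<or> n - 2 = 2*j+1" by blast
  then show False
  proof
    assume e: "n - 2 = 2*j"
    from orbit[OF s0 sl sC sD one inv, of j] obtain y where
      ev: "\<forall>\<^sub>F k in sequentially. (fmap (C k) (D k) ^^ (2*j)) (Some 1) = Some (y k)"
      and yl: "y \<longlonglongrightarrow> (gg a b ^^ j) 1" by blast
    have "\<forall>\<^sub>F k in sequentially. y k = 0" using ev by eventually_elim (metis key e option.inject)
    then have "y \<longlonglongrightarrow> 0" by (rule tendsto_eventually)
    with yl have "(gg a b ^^ j) 1 = 0" using LIMSEQ_unique by blast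
    with inv[of j] show False by (simp add: good_def)
  next
    assume e: "n - 2 = 2*j+1"
    from orbit_odd[OF s0 sl sC sD one inv, of j] obtain w where
      ev: "\<forall>\<^sub>F k in sequentially. (fmap (C k) (D k) ^^ (2*j+1)) (Some 1) = Some (w k)"
      and wl: "(\<lambda>k. s k * w k) \<longlonglongrightarrow> hh a b ((gg a b ^^ j) 1)" by blast
    have "\<forall>\<^sub>F k in sequentially. s k * w k = 0" using ev by eventually_elim (metis key e option.inject mult_zero_right)
    then have "(\<lambda>k. s k * w k) \<longlonglongrightarrow> 0" by (rule tendsto_eventually)
    with wl have "hh a b ((gg a b ^^ j) 1) = 0" using LIMSEQ_unique by blast
    with inv[of j] show False by (simp add: good_def)
  qed
qed

lemma Y_false:
  fixes a b :: complex
  assumes cl: "in_proj_closure (Yset m) (a, b, 0)" and m1: "m \<ge> 1" and a0: "a \<noteq> 0"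
    and inv: "\<And>j. good a b ((gg a b ^^ j) (-2*b/a))"
    and np: "\<And>j. j \<ge> 1 \<Longrightarrow> (gg a b ^^ j) (-2*b/a) \<noteq> -2*b/a"
  shows False
proof -
  obtain C D s :: "nat \<Rightarrow> complex" where mem: "\<And>k. (C k, D k) \<in> Yset m" and s0: "\<And>k. s k \<noteq> 0"
    and sl: "s \<longlonglongrightarrow> 0" and sC: "(\<lambda>k. s k * C k) \<longlonglongrightarrow> a" and sD: "(\<lambda>k. s k * D k) \<longlonglongrightarrow> b"
    using unpack[OF cl] by blast
  define p where "p k = -2 * D k / C k" for k
  have evC: "\<forall>\<^sub>F k in sequentially. s k * C k \<noteq> 0" using tendsto_imp_eventually_ne[OF sC a0] .
  have key: "\<forall>\<^sub>F k in sequentially. (fmap (C k) (D k) ^^ m) (Some (p k)) = Some (p k)"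
    using evC
  proof eventually_elim
    case (elim k)
    then have "C k \<noteq> 0" by auto
    then show ?case using mem[of k] by (simp add: Yset_def crit2_def p_def)
  qed
  have pl: "p \<longlonglongrightarrow> -2*b/a"
  proof -
    have "(\<lambda>k. -2 * (s k * D k) / (s k * C k)) \<longlonglongrightarrow> -2*b/a"
      by (intro tendsto_intros sC sD) (use a0 in auto)
    moreover have "(\<lambda>k. -2 * (s k * D k) / (s k * C k)) = p"
    proof
      fix k show "-2 * (s k * D k) / (s k * C k) = p k" using s0[of k] by (simp add: p_def)
    qed
    ultimately show ?thesis by simp
  qed
  have "\<exists>j. m = 2*j \<or> m = 2*j+1" by presburger
  then obtain j where "m = 2*j \<or> m = 2*j+1" by blast
  then show False
  proof
    assume e: "m = 2*j"
    with m1 have j1: "j \<ge> 1" by simp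
    from orbit[OF s0 sl sC sD pl inv, of j] obtain y where
      ev: "\<forall>\<^sub>F k in sequentially. (fmap (C k) (D k) ^^ (2*j)) (Some (p k)) = Some (y k)"
      and yl: "y \<longlonglongrightarrow> (gg a b ^^ j) (-2*b/a)" by blast
    have "\<forall>\<^sub>F k in sequentially. y k = p k" using ev key by eventually_elim (metis e option.inject)
    then have "p \<longlonglongrightarrow> (gg a b ^^ j) (-2*b/a)" using yl tendsto_cong[of y p] by blast
    then have "-2*b/a = (gg a b ^^ j) (-2*b/a)" by (rule LIMSEQ_unique[OF pl])
    with np[OF j1] show False by simp
  next
    assume e: "m = 2*j+1"
    from orbit_odd[OF s0 sl sC sD pl inv, of j] obtain w where
      ev: "\<forall>\<^sub>F k in sequentially. (fmap (C k) (D k) ^^ (2*j+1)) (Some (p k)) = Some (w k)"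
      and wl: "(\<lambda>k. s k * w k) \<longlonglongrightarrow> hh a b ((gg a b ^^ j) (-2*b/a))" by blast
    have "\<forall>\<^sub>F k in sequentially. s k * w k = s k * p k" using ev key by eventually_elim (metis e option.inject)
    then have l1: "(\<lambda>k. s k * p k) \<longlonglongrightarrow> hh a b ((gg a b ^^ j) (-2*b/a))"
      using wl tendsto_cong[of "\<lambda>k. s k * w k" "\<lambda>k. s k * p k"] by blast
    have "(\<lambda>k. s k * p k) \<longlonglongrightarrow> 0 * (-2*b/a)" by (intro tendsto_intros sl pl)
    then have "(\<lambda>k. s k * p k) \<longlonglongrightarrow> 0" by simp
    from LIMSEQ_unique[OF l1 this] have "hh a b ((gg a b ^^ j) (-2*b/a)) = 0" .
    with inv[of j] show False by (simp add: good_def)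
  qed
qed


lemma hh_alt: "z \<noteq> 0 \<Longrightarrow> hh a b z = (a*z+b)/z^2"
  by (simp add: hh_def field_simps power2_eq_square)

lemma goodR:
  assumes b: "b \<noteq> 0" and r0: "Re (a*z/b) \<noteq> 0" and r1: "Re (a*z/b) \<noteq> -1"
  shows "good a b z"
proof -
  have z: "z \<noteq> 0" using r0 by auto
  have "a*z+b \<noteq> 0"
  proof
    assume "a*z+b = 0"
    then have "a*z = -b" by (simp add: add_eq_0_iff)
    then have "a*z/b = -1" using b by simp
    then show False using r1 by simp
  qed
  then show ?thesis using z by (simp add: good_def hh_alt)
qed

lemma aux:
  fixes a b z w :: complex
  assumes wd: "w = a*z+b" and w0: "w \<noteq> 0" and b0: "b \<noteq> 0"
  shows "a*(1 + a*z^2/w)/b = a*z/b + b/w + a/b - 1"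
proof -
  have l: "a*(1 + a*z^2/w)/b * (b*w) = a*w + a^2*z^2" using w0 b0 by (simp add: field_simps power2_eq_square)
  have r: "(a*z/b + b/w + a/b - 1)*(b*w) = a*z*w + b^2 + a*w - b*w"
    using w0 b0 by (simp add: field_simps power2_eq_square)
  have m: "a*w + a^2*z^2 = a*z*w + b^2 + a*w - b*w" unfolding wd by (simp add: algebra_simps power2_eq_square)
  have "a*(1 + a*z^2/w)/b * (b*w) = (a*z/b + b/w + a/b - 1)*(b*w)" using l r m by simp
  moreover have "b*w \<noteq> 0" using w0 b0 by simp
  ultimately show ?thesis by simp
qed

lemma gg_id:
  assumes b: "b \<noteq> 0" and z: "z \<noteq> 0" and w: "a*z+b \<noteq> 0"
  shows "a * gg a b z / b = a*z/b + inverse (a*z/b + 1) + a/b - 1"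
proof -
  have g: "gg a b z = 1 + a*z^2/(a*z+b)" using z w by (simp add: gg_def hh_alt)
  have i: "inverse (a*z/b + 1) = b/(a*z+b)" using b w by (simp add: field_simps)
  show ?thesis unfolding g i by (rule aux[OF refl w b])
qed

lemma Re_inv_pos: "Re x > 0 \<Longrightarrow> Re (inverse x) > 0"
proof -
  assume h: "Re x > 0"
  then have "(Re x)^2 + (Im x)^2 > 0" by (simp add: add_pos_nonneg)
  with h show ?thesis by simp
qed

lemma Re_inv_neg: "Re x < 0 \<Longrightarrow> Re (inverse x) < 0"
proof -
  assume h: "Re x < 0"
  then have "(Re x)^2 + (Im x)^2 > 0" by (simp add: add_pos_nonneg)
  with h show ?thesis by (simp add: divide_neg_pos)
qed

lemma stepA:
  assumes b: "b \<noteq> 0" and ab: "Re (a/b) \<ge> 1" and p: "Re (a*z/b) > 0"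
  shows "Re (a * gg a b z / b) > 0"
proof -
  have g: "good a b z" using goodR[OF b] p by auto
  then have "z \<noteq> 0" "a*z+b \<noteq> 0" by (auto simp: good_def hh_alt)
  note id = gg_id[OF b this]
  have "Re (inverse (a*z/b + 1)) > 0" using p by (intro Re_inv_pos) simp
  then show ?thesis unfolding id using p ab by simp
qed

lemma stepB:
  assumes b: "b \<noteq> 0" and ab: "Re (a/b) < 1" and p: "Re (a*z/b) < -2"
  shows "Re (a * gg a b z / b) < -2"
proof -
  have g: "good a b z" using goodR[OF b] p by auto
  then have "z \<noteq> 0" "a*z+b \<noteq> 0" by (auto simp: good_def hh_alt)
  note id = gg_id[OF b this]
  have "Re (inverse (a*z/b + 1)) < 0" using p by (intro Re_inv_neg) simp
  then show ?thesis unfolding id using p ab by simp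
qed

lemma X_inv:
  fixes a b :: complex
  assumes "a = 0 \<or> b = 0 \<or> Re (a/b) \<ge> 1" and ab: "(a, b) \<noteq> (0, 0)"
  shows "good a b ((gg a b ^^ j) 1)"
proof -
  consider "a = 0" | "a \<noteq> 0" "b = 0" | "a \<noteq> 0" "b \<noteq> 0" "Re (a/b) \<ge> 1" using assms by blast
  then show ?thesis
  proof cases
    case 1
    then have b: "b \<noteq> 0" using ab by simp
    have "(gg a b ^^ j) 1 = 1" for j by (induction j) (auto simp: gg_def 1)
    then show ?thesis using b 1 by (simp add: good_def hh_def)
  next
    case 2
    have R: "Re ((gg a b ^^ j) 1) \<ge> 1" for j
    proof (induction j)
      case 0 then show ?case by simp
    next
      case (Suc j)
      let ?z = "(gg a b ^^ j) 1"
      have "?z \<noteq> 0" using Suc by auto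
      then have "gg a b ?z = 1 + ?z" using 2 by (simp add: gg_def hh_def)
      then show ?case using Suc by simp
    qed
    have "(gg a b ^^ j) 1 \<noteq> 0" using R[of j] by auto
    then show ?thesis using 2 by (simp add: good_def hh_def)
  next
    case 3
    have R: "Re (a * (gg a b ^^ j) 1 / b) > 0" for j
    proof (induction j)
      case 0 then show ?case using 3 by simp
    next
      case (Suc j)
      then show ?case using stepA[OF 3(2) 3(3) Suc] by simp
    qed
    show ?thesis using goodR[OF 3(2)] R[of j] by auto
  qed
qed

lemma Y_inv:
  fixes a b :: complex
  assumes a: "a \<noteq> 0" and b: "b \<noteq> 0" and ab: "Re (a/b) < 1"
  shows "good a b ((gg a b ^^ j) (-2*b/a))" and "j \<ge> 1 \<Longrightarrow> (gg a b ^^ j) (-2*b/a) \<noteq> -2*b/a"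
proof -
  let ?z0 = "-2*b/a"
  have e0: "a * ?z0 / b = -2" using a b by simp
  have g0: "good a b ?z0" using goodR[OF b] e0 by simp
  have z0: "?z0 \<noteq> 0" "a * ?z0 + b \<noteq> 0" using a b by (auto simp: field_simps)
  have e1: "a * gg a b ?z0 / b = -4 + a/b"
    unfolding gg_id[OF b z0] e0 by simp
  have R: "Re (a * (gg a b ^^ Suc j) ?z0 / b) < -2" for j
  proof (induction j)
    case 0 then show ?case using e1 ab by simp
  next
    case (Suc j)
    then show ?case using stepB[OF b ab Suc] by simp
  qed
  show "good a b ((gg a b ^^ j) ?z0)"
  proof (cases j)
    case 0 then show ?thesis using g0 by simp
  next
    case (Suc i) then show ?thesis using goodR[OF b] R[of i] by auto
  qed
  assume "j \<ge> 1"
  then obtain i where j: "j = Suc i" by (cases j) auto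
  show "(gg a b ^^ j) ?z0 \<noteq> ?z0" using R[of i] e0 j by auto
qed

theorem lemma2p2:
  fixes n m :: nat and c d :: complex
  assumes "n \<ge> 3" and "m \<ge> 1" and "(c, d) \<noteq> (0, 0)"
  shows "\<not> (in_proj_closure (Xset n) (c, d, 0) \<and> in_proj_closure (Yset m) (c, d, 0))"
proof
  assume h: "in_proj_closure (Xset n) (c, d, 0) \<and> in_proj_closure (Yset m) (c, d, 0)"
  show False
  proof (cases "c = 0 \<or> d = 0 \<or> Re (c/d) \<ge> 1")
    case True
    show False by (rule X_false[OF conjunct1[OF h] assms(1) X_inv[OF True assms(3)]])
  next
    case False
    then have c: "c \<noteq> 0" and d: "d \<noteq> 0" and r: "Re (c/d) < 1" by auto
    show False by (rule Y_false[OF conjunct2[OF h] assms(2) c Y_inv(1)[OF c d r] Y_inv(2)[OF c d r]])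
  qed
qed

end
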